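(* Let $\mathfrak g$ be a finite-dimensional real Lie algebra having an ideal of codimension one isomorphic to the Heisenberg Lie algebra $\mathfrak H_{2m+1}$ (for some $m\ge1$). Then: (a) if $\mathfrak g$ is not unimodular, then no inner product on $\mathfrak g$ has a geodesic basis; (b) if $\mathfrak g$ is unimodular, then every inner product on $\mathfrak g$ has an orthonormal geodesic basis.
   Context: For an inner product $\langle\cdot,\cdot\rangle$ on a real Lie algebra $\mathfrak g$, a nonzero $X\in\mathfrak g$ is a geodesic element if $\langle X,[X,Y]\rangle=0$ for all $Y\in\mathfrak g$; a geodesic basis is a basis consisting of geodesic elements. A Lie algebra is unimodular if $\operatorname{Tr}(\operatorname{ad}(X))=0$ for all $X$. The Heisenberg Lie algebra $\mathfrak H_{2m+1}$ has basis $\{X_1,\dots,X_{2m+1}\}$ with nonzero brackets $[X_i,X_{i+m}]=X_{2m+1}$ for $i=1,\dots,m$ (and all other brackets of basis elements zero, up to antisymmetry). *)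

theory Defs
  imports "HOL-Analysis.Analysis"
begin

text \<open>The Euclidean inner product of the type is only used to define the trace;
the inner products of the statement are arbitrary.\<close>

definition lie_algebra :: "('a::euclidean_space \<Rightarrow> 'a \<Rightarrow> 'a) \<Rightarrow> bool" where
  "lie_algebra br \<longleftrightarrow> bilinear br \<and> (\<forall>x. br x x = 0) \<and>
     (\<forall>x y z. br x (br y z) + br y (br z x) + br z (br x y) = 0)"

definition trace_map :: "('a::euclidean_space \<Rightarrow> 'a) \<Rightarrow> real" where
  "trace_map f = (\<Sum>b\<in>Basis. inner (f b) b)"

definition unimodular :: "('a::euclidean_space \<Rightarrow> 'a \<Rightarrow> 'a) \<Rightarrow> bool" where
  "unimodular br \<longleftrightarrow> (\<forall>X. trace_map (br X) = 0)"

definition lie_ideal :: "('a::euclidean_space \<Rightarrow> 'a \<Rightarrow> 'a) \<Rightarrow> 'a set \<Rightarrow> bool" where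
  "lie_ideal br h \<longleftrightarrow> subspace h \<and> (\<forall>x\<in>h. \<forall>y. br y x \<in> h)"

text \<open>h is isomorphic (as a Lie algebra, with the bracket of g restricted) to the
Heisenberg algebra H_{2m+1}: it has a basis X_1,...,X_{2m+1} with
[X_i, X_{i+m}] = X_{2m+1} (i = 1..m) and all other brackets of basis elements zero
(up to antisymmetry).\<close>
definition heisenberg_basis ::
  "('a::euclidean_space \<Rightarrow> 'a \<Rightarrow> 'a) \<Rightarrow> nat \<Rightarrow> 'a set \<Rightarrow> (nat \<Rightarrow> 'a) \<Rightarrow> bool" where
  "heisenberg_basis br m h X \<longleftrightarrow>
     inj_on X {1..2*m+1} \<and> independent (X ` {1..2*m+1}) \<and> span (X ` {1..2*m+1}) = h \<and>
     (\<forall>i\<in>{1..2*m+1}. \<forall>j\<in>{1..2*m+1}.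
        br (X i) (X j) =
          (if i \<le> m \<and> j = i + m then X (2*m+1)
           else if j \<le> m \<and> i = j + m then - X (2*m+1)
           else 0))"

definition isomorphic_to_heisenberg ::
  "('a::euclidean_space \<Rightarrow> 'a \<Rightarrow> 'a) \<Rightarrow> nat \<Rightarrow> 'a set \<Rightarrow> bool" where
  "isomorphic_to_heisenberg br m h \<longleftrightarrow> (\<exists>X. heisenberg_basis br m h X)"

definition inner_product :: "('a::real_vector \<Rightarrow> 'a \<Rightarrow> real) \<Rightarrow> bool" where
  "inner_product B \<longleftrightarrow> bilinear B \<and> (\<forall>x y. B x y = B y x) \<and> (\<forall>x. x \<noteq> 0 \<longrightarrow> B x x > 0)"

definition geodesic_element ::
  "('a::real_vector \<Rightarrow> 'a \<Rightarrow> real) \<Rightarrow> ('a \<Rightarrow> 'a \<Rightarrow> 'a) \<Rightarrow> 'a \<Rightarrow> bool" where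
  "geodesic_element B br X \<longleftrightarrow> X \<noteq> 0 \<and> (\<forall>Y. B X (br X Y) = 0)"

definition geodesic_basis ::
  "('a::real_vector \<Rightarrow> 'a \<Rightarrow> real) \<Rightarrow> ('a \<Rightarrow> 'a \<Rightarrow> 'a) \<Rightarrow> 'a set \<Rightarrow> bool" where
  "geodesic_basis B br S \<longleftrightarrow> independent S \<and> span S = UNIV \<and> (\<forall>X\<in>S. geodesic_element B br X)"

definition orthonormal_wrt :: "('a \<Rightarrow> 'a \<Rightarrow> real) \<Rightarrow> 'a set \<Rightarrow> bool" where
  "orthonormal_wrt B S \<longleftrightarrow> (\<forall>x\<in>S. \<forall>y\<in>S. B x y = (if x = y then 1 else 0))"

end

theory Submission
  imports Defs
begin

lemma bil_l: "bilinear f \<Longrightarrow> linear (\<lambda>x. f x y)" and bil_r: "bilinear f \<Longrightarrow> linear (f x)"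
  by (simp_all add: bilinear_def)

lemma trace_coords:
  fixes f :: "'a::euclidean_space \<Rightarrow> 'a" and Bs :: "'a set" and c :: "'a \<Rightarrow> 'a \<Rightarrow> real"
  assumes f: "linear f" and fin: "finite Bs" and cl: "\<And>b. b \<in> Bs \<Longrightarrow> linear (c b)"
    and rep: "\<And>x. (\<Sum>b\<in>Bs. c b x *\<^sub>R b) = x"
  shows "trace_map f = (\<Sum>b\<in>Bs. c b (f b))"
proof -
  have "trace_map f = (\<Sum>\<beta>\<in>Basis. inner (f (\<Sum>b\<in>Bs. c b \<beta> *\<^sub>R b)) \<beta>)"
    by (simp add: trace_map_def rep)
  also have "\<dots> = (\<Sum>\<beta>\<in>Basis. \<Sum>b\<in>Bs. c b \<beta> * inner (f b) \<beta>)"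
    by (simp add: linear_sum[OF f] linear_scale[OF f] inner_sum_left)
  also have "\<dots> = (\<Sum>b\<in>Bs. \<Sum>\<beta>\<in>Basis. c b \<beta> * inner (f b) \<beta>)" by (rule sum.swap)
  also have "\<dots> = (\<Sum>b\<in>Bs. c b (\<Sum>\<beta>\<in>Basis. inner (f b) \<beta> *\<^sub>R \<beta>))"
    by (rule sum.cong) (simp_all add: linear_sum[OF cl] linear_scale[OF cl] mult.commute)
  also have "\<dots> = (\<Sum>b\<in>Bs. c b (f b))" by (simp add: euclidean_representation)
  finally show ?thesis .
qed

lemma ip_bil: "inner_product B \<Longrightarrow> bilinear B" and ip_sym: "inner_product B \<Longrightarrow> B x y = B y x"
  and ip_pos: "inner_product B \<Longrightarrow> x \<noteq> 0 \<Longrightarrow> B x x > 0"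
  by (auto simp: inner_product_def)

lemma ip_lin: "inner_product B \<Longrightarrow> linear (B x)"
  using bil_r ip_bil by blast

lemma ip_lin_l: "inner_product B \<Longrightarrow> linear (\<lambda>x. B x y)"
  using bil_l ip_bil by blast

lemma ip_zero: "inner_product B \<Longrightarrow> B x 0 = 0" "inner_product B \<Longrightarrow> B 0 x = 0"
  using linear_0[OF ip_lin] linear_0[OF ip_lin_l] by auto

lemma ip_sum_r: assumes "inner_product B" shows "B x (\<Sum>v\<in>S. u v *\<^sub>R v) = (\<Sum>v\<in>S. u v * B x v)"
proof -
  have l: "linear (B x)" using ip_lin[OF assms] .
  show ?thesis by (simp add: linear_sum[OF l] linear_scale[OF l])
qed

lemma ip_sum_l: assumes "inner_product B" shows "B (\<Sum>v\<in>S. u v *\<^sub>R v) x = (\<Sum>v\<in>S. u v * B v x)"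
proof -
  have "B (\<Sum>v\<in>S. u v *\<^sub>R v) x = B x (\<Sum>v\<in>S. u v *\<^sub>R v)" using ip_sym[OF assms] by simp
  also have "\<dots> = (\<Sum>v\<in>S. u v * B x v)" by (rule ip_sum_r[OF assms])
  also have "\<dots> = (\<Sum>v\<in>S. u v * B v x)" using ip_sym[OF assms] by simp
  finally show ?thesis .
qed

lemma on_subset: "orthonormal_wrt B S \<Longrightarrow> T \<subseteq> S \<Longrightarrow> orthonormal_wrt B T"
  unfolding orthonormal_wrt_def by blast

lemma ip_span_zero:
  assumes ip: "inner_product B" and S: "\<And>s. s \<in> S \<Longrightarrow> B y s = 0" and x: "x \<in> span S"
  shows "B y x = 0"
  using real_vector.linear_eq_0_on_span[OF ip_lin[OF ip] S x] .

lemma on_one: "orthonormal_wrt B S \<Longrightarrow> x \<in> S \<Longrightarrow> B x x = 1"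
  and on_zero: "orthonormal_wrt B S \<Longrightarrow> x \<in> S \<Longrightarrow> y \<in> S \<Longrightarrow> x \<noteq> y \<Longrightarrow> B x y = 0"
  by (auto simp: orthonormal_wrt_def)

lemma on_delta_sum:
  assumes ip: "inner_product B" and on: "orthonormal_wrt B S" and fin: "finite S" and t: "t \<in> S"
  shows "B (\<Sum>v\<in>S. u v *\<^sub>R v) t = u t"
proof -
  have "B (\<Sum>v\<in>S. u v *\<^sub>R v) t = (\<Sum>v\<in>S. u v * B v t)" by (rule ip_sum_l[OF ip])
  also have "\<dots> = (\<Sum>v\<in>S. if v = t then u v else 0)"
    by (rule sum.cong) (use on t in \<open>auto simp: orthonormal_wrt_def\<close>)
  also have "\<dots> = u t" using fin t by simp
  finally show ?thesis .
qed

lemma on_indep: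
  assumes ip: "inner_product B" and on: "orthonormal_wrt B S"
  shows "independent S"
proof
  assume "dependent S"
  then obtain T u where T: "finite T" "T \<subseteq> S" "(\<Sum>v\<in>T. u v *\<^sub>R v) = 0" and v: "\<exists>v\<in>T. u v \<noteq> 0"
    unfolding real_vector.dependent_explicit by blast
  from v obtain v where v: "v \<in> T" "u v \<noteq> 0" by blast
  have onT: "orthonormal_wrt B T" using on_subset[OF on T(2)] .
  have "u v = B (\<Sum>v\<in>T. u v *\<^sub>R v) v" using on_delta_sum[OF ip onT T(1) v(1)] by simp
  also have "\<dots> = 0" using T(3) ip_zero[OF ip] by simp
  finally show False using v by simp
qed

lemma on_expand:
  assumes ip: "inner_product B" and on: "orthonormal_wrt B S" and fin: "finite S" and x: "x \<in> span S"
  shows "(\<Sum>b\<in>S. B x b *\<^sub>R b) = x"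
proof -
  from x obtain u where u: "x = (\<Sum>v\<in>S. u v *\<^sub>R v)" using real_vector.span_finite[OF fin] by auto
  have "\<And>b. b \<in> S \<Longrightarrow> B x b = u b" using on_delta_sum[OF ip on fin] u by simp
  then show ?thesis using u by (auto intro: sum.cong)
qed

lemma ip_nz: "inner_product B \<Longrightarrow> B x x = 1 \<Longrightarrow> x \<noteq> 0"
  using ip_zero by force

lemma span_sub: "A \<subseteq> span B \<Longrightarrow> span A \<subseteq> span B"
  by (simp add: span_minimal)

lemma on_insert:
  assumes "orthonormal_wrt B S" "B u u = 1" "\<And>s. s \<in> S \<Longrightarrow> B u s = 0" "\<And>s. s\<in>S \<Longrightarrow> B s u = 0"
  shows "orthonormal_wrt B (insert u S)"
  using assms unfolding orthonormal_wrt_def by force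

lemma ip_add_l: "inner_product B \<Longrightarrow> B (x + y) z = B x z + B y z"
  using linear_add[OF ip_lin_l] by blast
lemma ip_add_r: "inner_product B \<Longrightarrow> B z (x + y) = B z x + B z y"
  using linear_add[OF ip_lin] by blast
lemma ip_scale_l: "inner_product B \<Longrightarrow> B (a *\<^sub>R x) z = a * B x z"
  using linear_scale[OF ip_lin_l] by (metis real_scaleR_def)
lemma ip_scale_r: "inner_product B \<Longrightarrow> B z (a *\<^sub>R x) = a * B z x"
  using linear_scale[OF ip_lin] by (metis real_scaleR_def)
lemma ip_diff_l: "inner_product B \<Longrightarrow> B (x - y) z = B x z - B y z"
  using linear_diff[OF ip_lin_l] by blast
lemma ip_diff_r: "inner_product B \<Longrightarrow> B z (x - y) = B z x - B z y"
  using linear_diff[OF ip_lin] by blast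

lemma gs_extend:
  fixes W :: "'a::euclidean_space set"
  assumes ip: "inner_product B" and W: "subspace W"
  shows "finite S0 \<Longrightarrow> S0 \<subseteq> W \<Longrightarrow> orthonormal_wrt B S0 \<Longrightarrow>
         \<exists>S. S0 \<subseteq> S \<and> S \<subseteq> W \<and> finite S \<and> orthonormal_wrt B S \<and> span S = W"
proof (induction "dim W - card S0" arbitrary: S0 rule: less_induct)
  case less
  show ?case
  proof (cases "W \<subseteq> span S0")
    case True
    have "span S0 \<subseteq> W" using less.prems(2) W by (simp add: span_minimal)
    then show ?thesis using True less.prems by blast
  next
    case False
    then obtain w where w: "w \<in> W" "w \<notin> span S0" by blast
    define w' where "w' = w - (\<Sum>s\<in>S0. B w s *\<^sub>R s)"
    have sp: "(\<Sum>s\<in>S0. B w s *\<^sub>R s) \<in> span S0" by (intro span_sum span_scale span_base)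
    have spW: "(\<Sum>s\<in>S0. B w s *\<^sub>R s) \<in> W"
      using less.prems(2) W by (intro subspace_sum subspace_scale) auto
    have w'W: "w' \<in> W" unfolding w'_def using W w(1) spW by (simp add: subspace_diff)
    have w'nz: "w' \<noteq> 0" using w(2) sp unfolding w'_def by auto
    have orth: "B w' s = 0" if s: "s \<in> S0" for s
    proof -
      have "B w' s = B w s - B (\<Sum>t\<in>S0. B w t *\<^sub>R t) s" unfolding w'_def by (simp add: ip_diff_l[OF ip])
      also have "\<dots> = 0" using on_delta_sum[OF ip less.prems(3) less.prems(1) s] by simp
      finally show "B w' s = 0" .
    qed
    have pos: "B w' w' > 0" using ip_pos[OF ip w'nz] .
    define u where "u = (1 / sqrt (B w' w')) *\<^sub>R w'"
    have uu: "B u u = 1" unfolding u_def using pos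
      by (simp add: ip_scale_l[OF ip] ip_scale_r[OF ip])
    have us: "B u s = 0" if "s \<in> S0" for s unfolding u_def using orth[OF that] by (simp add: ip_scale_l[OF ip])
    have su: "B s u = 0" if "s \<in> S0" for s using us[OF that] ip_sym[OF ip] by metis
    have uS0: "u \<notin> S0" using us uu by force
    have uW: "u \<in> W" unfolding u_def using w'W W by (simp add: subspace_scale)
    define S1 where "S1 = insert u S0"
    have on1: "orthonormal_wrt B S1" unfolding S1_def by (rule on_insert[OF less.prems(3) uu us su])
    have fin1: "finite S1" using less.prems(1) S1_def by simp
    have sub1: "S1 \<subseteq> W" using uW less.prems(2) S1_def by simp
    have card1: "card S1 = Suc (card S0)" using uS0 less.prems(1) S1_def by simp
    have "card S1 \<le> dim W" using independent_card_le_dim[OF sub1 on_indep[OF ip on1]] .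
    then have "dim W - card S1 < dim W - card S0" using card1 by simp
    from less.hyps[OF this fin1 sub1 on1] obtain S where
      "S1 \<subseteq> S" "S \<subseteq> W" "finite S" "orthonormal_wrt B S" "span S = W" by blast
    then show ?thesis unfolding S1_def by blast
  qed
qed
lemma vec1: fixes t1 t2 :: "'a::real_vector"
  shows "((1/N) *\<^sub>R t1 + (k/N) *\<^sub>R t2) - k *\<^sub>R ((-k/N) *\<^sub>R t1 + (1/N) *\<^sub>R t2) = ((1 + k*k)/N) *\<^sub>R t1"
proof -
  have "((1 + k*k)/N) *\<^sub>R t1 = (1/N) *\<^sub>R t1 + (k*k/N) *\<^sub>R t1" by (simp add: add_divide_distrib scaleR_add_left)
  then show ?thesis by (simp add: scaleR_add_right scaleR_diff_right)
qed
lemma vec2: fixes t1 t2 :: "'a::real_vector"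
  shows "k *\<^sub>R ((1/N) *\<^sub>R t1 + (k/N) *\<^sub>R t2) + ((-k/N) *\<^sub>R t1 + (1/N) *\<^sub>R t2) = ((1 + k*k)/N) *\<^sub>R t2"
proof -
  have "((1 + k*k)/N) *\<^sub>R t2 = (1/N) *\<^sub>R t2 + (k*k/N) *\<^sub>R t2" by (simp add: add_divide_distrib scaleR_add_left)
  then show ?thesis by (simp add: scaleR_add_right scaleR_diff_right)
qed
lemma alg3: assumes "nn*nn = 1 + q*q" "nn > 0" shows "(1/nn)*(1/nn) * 1 + (1/nn)*(q/nn) * 0 + (q/nn)*(1/nn)*0 + (q/nn)*(q/nn)*(1::real) = 1"
proof -
  have "(1/nn)*(1/nn) * 1 + (1/nn)*(q/nn) * 0 + (q/nn)*(1/nn)*0 + (q/nn)*(q/nn)*(1::real) = (1+q*q)/(nn*nn)"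
    using assms by (simp add: field_simps)
  also have "\<dots> = 1" using assms(2) by (simp add: assms(1)[symmetric])
  finally show ?thesis .
qed
lemma alg4: assumes "nn*nn = 1 + q*q" "nn > 0" shows "(-q/nn)*(-q/nn) * 1 + (-q/nn)*(1/nn) * 0 + (1/nn)*(-q/nn)*0 + (1/nn)*(1/nn)*(1::real) = 1"
proof -
  have "(-q/nn)*(-q/nn) * 1 + (-q/nn)*(1/nn) * 0 + (1/nn)*(-q/nn)*0 + (1/nn)*(1/nn)*(1::real) = (1+q*q)/(nn*nn)"
    using assms by (simp add: field_simps)
  also have "\<dots> = 1" using assms(2) by (simp add: assms(1)[symmetric])
  finally show ?thesis .
qed

lemma bil_expand:
  assumes ip: "inner_product B"
  shows "B (a *\<^sub>R x + b *\<^sub>R y) (a' *\<^sub>R x + b' *\<^sub>R y) =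
     a*a' * B x x + a*b' * B x y + b*a' * B y x + b*b' * B y y"
  by (simp add: ip_add_l[OF ip] ip_add_r[OF ip] ip_scale_l[OF ip] ip_scale_r[OF ip] algebra_simps)

lemma quad_expand:
  assumes ip: "inner_product B" and L: "linear L"
  shows "B (a *\<^sub>R x + b *\<^sub>R y) (L (a *\<^sub>R x + b *\<^sub>R y)) =
     a*a * B x (L x) + a*b*(B x (L y) + B y (L x)) + b*b * B y (L y)"
  by (simp add: linear_add[OF L] linear_scale[OF L] ip_add_l[OF ip] ip_add_r[OF ip]
      ip_scale_l[OF ip] ip_scale_r[OF ip] algebra_simps)

lemma isotropic_basis:
  assumes ip: "inner_product B" and L: "linear L"
  shows "finite T \<Longrightarrow> orthonormal_wrt B T \<Longrightarrow> (\<Sum>t\<in>T. B t (L t)) = 0 \<Longrightarrow>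
     \<exists>T'. finite T' \<and> orthonormal_wrt B T' \<and> span T' = span T \<and> (\<forall>t\<in>T'. B t (L t) = 0)"
proof (induction "card T" arbitrary: T rule: less_induct)
  case less
  note fin = less.prems(1) and on = less.prems(2) and sum0 = less.prems(3)
  show ?case
  proof (cases "\<forall>t\<in>T. B t (L t) = 0")
    case True then show ?thesis using fin on by blast
  next
    case False
    have "\<exists>t1\<in>T. B t1 (L t1) > 0"
    proof (rule ccontr)
      assume a: "\<not> (\<exists>t1\<in>T. B t1 (L t1) > 0)"
      have h1: "\<And>t. t \<in> T \<Longrightarrow> 0 \<le> - B t (L t)" using a by (simp add: not_less)
      have s0: "(\<Sum>t\<in>T. - B t (L t)) = 0" using sum0 by (simp add: sum_negf)
      have "\<forall>t\<in>T. - B t (L t) = 0" using sum_nonneg_eq_0_iff[OF fin h1] s0 by simp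
      then show False using False by simp
    qed
    then obtain t1 where t1: "t1 \<in> T" "B t1 (L t1) > 0" by blast
    have "\<exists>t2\<in>T. B t2 (L t2) < 0"
    proof (rule ccontr)
      assume a: "\<not> (\<exists>t2\<in>T. B t2 (L t2) < 0)"
      have h1: "\<And>t. t \<in> T \<Longrightarrow> 0 \<le> B t (L t)" using a by (simp add: not_less)
      have "\<forall>t\<in>T. B t (L t) = 0" using sum_nonneg_eq_0_iff[OF fin h1] sum0 by simp
      then show False using False by simp
    qed
    then obtain t2 where t2: "t2 \<in> T" "B t2 (L t2) < 0" by blast
    have t12: "t1 \<noteq> t2" using t1 t2 by auto
    define p where "p = B t1 (L t1)"
    define r where "r = B t2 (L t2)"
    define c where "c = B t1 (L t2) + B t2 (L t1)"
    define D where "D = c*c - 4*p*r"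
    have p0: "p > 0" and r0: "r < 0" using t1 t2 p_def r_def by auto
    have D0: "D > 0" unfolding D_def using p0 r0 by (smt (verit) mult_pos_neg zero_le_square)
    define k where "k = (- c + sqrt D) / (2*r)"
    have rs: "2 * r * k = sqrt D - c" unfolding k_def using r0 by simp
    have sq: "sqrt D * sqrt D = D" using D0 by simp
    have root: "p + c*k + r*k*k = 0"
    proof -
      have e1: "2*c + 2*r*k = sqrt D + c" using rs by linarith
      have "(p + c*k + r*k*k) * (4*r) = 4*p*r + (2*c + 2*r*k) * (2*r*k)" by (simp add: algebra_simps)
      also have "\<dots> = 4*p*r + (sqrt D + c) * (sqrt D - c)" using e1 rs by simp
      also have "\<dots> = 0" using sq D_def by (simp add: algebra_simps)
      finally show ?thesis using r0 by simp
    qed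
    define N where "N = sqrt (1 + k*k)"
    have N0: "N > 0" unfolding N_def by (simp add: add_pos_nonneg)
    have NN: "N * N = 1 + k*k" unfolding N_def by (simp add: add_nonneg_nonneg)
    define v where "v = (1/N) *\<^sub>R t1 + (k/N) *\<^sub>R t2"
    define w where "w = (-k/N) *\<^sub>R t1 + (1/N) *\<^sub>R t2"
    have b11: "B t1 t1 = 1" and b22: "B t2 t2 = 1" and b12: "B t1 t2 = 0" and b21: "B t2 t1 = 0"
      using on t1 t2 t12 by (auto simp: orthonormal_wrt_def)
    have qv: "B v (L v) = 0"
    proof -
      have "B v (L v) = (1/N)*(1/N)*p + (1/N)*(k/N)*c + (k/N)*(k/N)*r"
        unfolding v_def quad_expand[OF ip L] p_def r_def c_def by simp
      also have "\<dots> = (p + c*k + r*k*k) / (N*N)" using N0 by (simp add: field_simps)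
      finally show ?thesis using root by simp
    qed
    have qw: "B w (L w) = p + r"
    proof -
      have "B w (L w) = (-k/N)*(-k/N)*p + (-k/N)*(1/N)*c + (1/N)*(1/N)*r"
        unfolding w_def quad_expand[OF ip L] p_def r_def c_def by simp
      also have "\<dots> = (k*k*p - c*k + r) / (N*N)" using N0 by (simp add: field_simps)
      also have "\<dots> = ((p + r) * (N*N) - (p + c*k + r*k*k)) / (N*N)" using NN by (simp add: algebra_simps)
      also have "\<dots> = p + r" using root N0 by simp
      finally show ?thesis .
    qed
    have vv: "B v v = 1" unfolding v_def bil_expand[OF ip] b11 b12 b21 b22 by (rule alg3[OF NN N0])
    have ww: "B w w = 1" unfolding w_def bil_expand[OF ip] b11 b12 b21 b22 by (rule alg4[OF NN N0])
    have vw: "B v w = 0" unfolding v_def w_def bil_expand[OF ip] b11 b12 b21 b22 using N0 by (simp add: field_simps)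
    have wv: "B w v = 0" using vw ip_sym[OF ip] by metis
    have vt: "B v t = 0" "B w t = 0" if "t \<in> T - {t1,t2}" for t
    proof -
      have "B t1 t = 0" "B t2 t = 0" using on that t1 t2 by (auto simp: orthonormal_wrt_def)
      then show "B v t = 0" "B w t = 0" unfolding v_def w_def by (simp_all add: ip_add_l[OF ip] ip_diff_l[OF ip] ip_scale_l[OF ip])
    qed
    have tv: "B t v = 0" "B t w = 0" if "t \<in> T - {t1,t2}" for t
      using vt[OF that] ip_sym[OF ip] by metis+
    define T2 where "T2 = insert w (T - {t1,t2})"
    have wT: "w \<notin> T - {t1,t2}" using vt(2) ww by force
    have fin2: "finite T2" using fin T2_def by simp
    have on0: "orthonormal_wrt B (T - {t1,t2})" using on_subset[OF on] by blast
    have on2: "orthonormal_wrt B T2" unfolding T2_def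
      by (rule on_insert[OF on0 ww]) (use vt tv in auto)
    have cardT: "card (T - {t1,t2}) = card T - 2" using fin t1 t2 t12 by (simp add: card_Diff_subset)
    have card2: "card T2 < card T"
    proof -
      have "card T \<ge> 2" using card_mono[OF fin, of "{t1,t2}"] t1 t2 t12 by simp
      then show ?thesis unfolding T2_def using wT fin cardT by simp
    qed
    have sumT: "(\<Sum>t\<in>T. B t (L t)) = p + r + (\<Sum>t\<in>T - {t1,t2}. B t (L t))"
    proof -
      have "(\<Sum>t\<in>T. B t (L t)) = B t1 (L t1) + (\<Sum>t\<in>T - {t1}. B t (L t))" using sum.remove[OF fin t1(1)] .
      also have "(\<Sum>t\<in>T - {t1}. B t (L t)) = B t2 (L t2) + (\<Sum>t\<in>T - {t1} - {t2}. B t (L t))"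
        using sum.remove[of "T - {t1}" t2] fin t2 t12 by simp
      finally show ?thesis unfolding p_def r_def by (simp add: Diff_insert2[symmetric] insert_commute)
    qed
    have sum2: "(\<Sum>t\<in>T2. B t (L t)) = 0"
      unfolding T2_def using wT fin qw sumT sum0 by simp
    from less.hyps[OF card2 fin2 on2 sum2] obtain T3 where
      T3: "finite T3" "orthonormal_wrt B T3" "span T3 = span T2" "\<forall>t\<in>T3. B t (L t) = 0" by blast
    have vT2: "B v x = 0" if "x \<in> T2" for x using that vw vt unfolding T2_def by auto
    have vT3: "B v x = 0" if "x \<in> T3" for x
      using ip_span_zero[OF ip vT2] that T3(3) span_base by blast
    have T3v: "B x v = 0" if "x \<in> T3" for x using vT3[OF that] ip_sym[OF ip] by metis
    have on3: "orthonormal_wrt B (insert v T3)" by (rule on_insert[OF T3(2) vv vT3 T3v])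
    have NdN: "(1 + k*k)/N = N" using NN N0 by (simp add: NN[symmetric])
    have t1eq: "t1 = (1/N) *\<^sub>R (v - k *\<^sub>R w)"
      using vec1[of N t1 k t2] NdN N0 unfolding v_def w_def by simp
    have t2eq: "t2 = (1/N) *\<^sub>R (k *\<^sub>R v + w)"
      using vec2[of k N t1 t2] NdN N0 unfolding v_def w_def by simp
    have spanv: "span (insert v T3) = span (insert v T2)"
      using T3(3) by (simp add: span_insert)
    have "span (insert v T2) = span T"
    proof
      show "span (insert v T2) \<subseteq> span T"
      proof (rule span_sub)
        have vS: "v \<in> span T" unfolding v_def using t1 t2 by (intro span_add span_scale span_base)
        have wS: "w \<in> span T" unfolding w_def using t1 t2 by (intro span_add span_scale span_base)
        show "insert v T2 \<subseteq> span T" using vS wS unfolding T2_def by (auto intro: span_base)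
      qed
      show "span T \<subseteq> span (insert v T2)"
      proof (rule span_sub, rule subsetI)
        fix x assume x: "x \<in> T"
        have vin: "v \<in> span (insert v T2)" and win: "w \<in> span (insert v T2)"
          unfolding T2_def by (auto intro: span_base)
        show "x \<in> span (insert v T2)"
        proof (cases "x = t1 \<or> x = t2")
          case True
          then show ?thesis using vin win t1eq t2eq
            by (metis span_add span_diff span_scale)
        next
          case False
          then show ?thesis using x unfolding T2_def by (auto intro: span_base)
        qed
      qed
    qed
    then show ?thesis using spanv T3 on3 qv by auto
  qed
qed

locale heis =
  fixes br :: "'a::euclidean_space \<Rightarrow> 'a \<Rightarrow> 'a" and m :: nat and h :: "'a set"
    and X :: "nat \<Rightarrow> 'a" and e :: 'a
  assumes lie: "lie_algebra br" and m1: "1 \<le> m" and idl: "lie_ideal br h"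
    and dimh: "dim h + 1 = DIM('a)" and hb: "heisenberg_basis br m h X" and e_notin: "e \<notin> h"
begin

abbreviation "I \<equiv> {1..2*m+1}"
abbreviation "z \<equiv> X (2*m+1)"
definition "Bs = insert e (X ` I)"
definition "c k v = representation Bs v (X k)"

lemma bil: "bilinear br" using lie by (simp add: lie_algebra_def)
lemma alt: "br x x = 0" using lie by (simp add: lie_algebra_def)
lemma jac: "br x (br y w) + br y (br w x) + br w (br x y) = 0" using lie by (simp add: lie_algebra_def)
lemma linl: "linear (\<lambda>x. br x y)" using bil_l[OF bil] .
lemma linr: "linear (br x)" using bil_r[OF bil] .
lemma br_add_l: "br (x + y) w = br x w + br y w" using linear_add[OF linl] by blast
lemma br_add_r: "br w (x + y) = br w x + br w y" using linear_add[OF linr] by blast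
lemma br_scale_l: "br (a *\<^sub>R x) w = a *\<^sub>R br x w" using linear_scale[OF linl] by blast
lemma br_scale_r: "br w (a *\<^sub>R x) = a *\<^sub>R br w x" using linear_scale[OF linr] by blast
lemma br_zero_l: "br 0 w = 0" using linear_0[OF linl] by blast
lemma br_zero_r: "br w 0 = 0" using linear_0[OF linr] by blast
lemma br_neg_r: "br w (- x) = - br w x" using linear_neg[OF linr] by blast
lemma br_neg_l: "br (- x) w = - br x w" using linear_neg[OF linl] by blast

lemma anti: "br x y = - br y x"
proof -
  have "0 = br (x+y) (x+y)" by (simp only: alt)
  also have "\<dots> = (br x x + br y x) + (br x y + br y y)" by (simp only: br_add_l br_add_r)
  also have "\<dots> = br x y + br y x" by (simp add: alt add.commute)
  finally have "br x y + br y x = 0" by simp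
  then show ?thesis by (simp add: eq_neg_iff_add_eq_0)
qed

lemma sub_h: "subspace h" using idl by (simp add: lie_ideal_def)
lemma idl_mem: "x \<in> h \<Longrightarrow> br y x \<in> h" using idl by (simp add: lie_ideal_def)
lemma hinj: "inj_on X I" and hind: "independent (X ` I)" and hspan: "span (X ` I) = h"
  using hb by (auto simp: heisenberg_basis_def)
lemma htab: "i\<in>I \<Longrightarrow> j\<in>I \<Longrightarrow> br (X i) (X j) =
   (if i \<le> m \<and> j = i + m then z else if j \<le> m \<and> i = j + m then - z else 0)"
  using hb by (auto simp: heisenberg_basis_def)
lemma Xh: "k \<in> I \<Longrightarrow> X k \<in> h" using hspan span_base[of "X k" "X ` I"] by auto
lemma zh: "z \<in> h" using Xh by simp
lemma z_nz: "z \<noteq> 0"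
proof
  assume "z = 0"
  then have "0 \<in> X ` I" by force
  then show False using hind real_vector.dependent_zero by blast
qed
lemma cardXI: "card (X ` I) = 2*m+1" using card_image[OF hinj] by simp
lemma dim_h: "dim h = 2*m+1"
  using dim_eq_card_independent[OF hind] cardXI hspan dim_span[of "X ` I"] by simp
lemma DIM_eq: "DIM('a) = 2*m+2" using dimh dim_h by simp
lemma e_notin_X: "e \<notin> X ` I" using e_notin Xh by auto
lemma fin_Bs: "finite Bs" unfolding Bs_def by simp
lemma card_Bs: "card Bs = 2*m+2" unfolding Bs_def using e_notin_X cardXI by simp
lemma ind_Bs: "independent Bs" unfolding Bs_def
  using independent_insertI[OF _ hind] e_notin hspan by simp
lemma span_Bs: "span Bs = UNIV"
proof -
  have "card Bs = dim (UNIV :: 'a set)" using card_Bs DIM_eq dim_UNIV by simp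
  then show ?thesis using card_eq_dim[of Bs UNIV] fin_Bs ind_Bs by auto
qed
lemma rep_lin: "linear (\<lambda>v. representation Bs v b)"
  using bounded_linear.linear[OF bounded_linear_representation[OF ind_Bs span_Bs]] .
lemma rep_expand: "(\<Sum>b\<in>Bs. representation Bs v b *\<^sub>R b) = v"
  using real_vector.sum_representation_eq[OF ind_Bs _ fin_Bs] span_Bs by auto
lemma rep_basis: "b \<in> Bs \<Longrightarrow> representation Bs b b' = (if b' = b then 1 else 0)"
  using real_vector.representation_basis[OF ind_Bs] by simp
lemma c_lin: "linear (c k)" unfolding c_def[abs_def] using rep_lin .
lemma c_scale: "c k (a *\<^sub>R v) = a * c k v" using linear_scale[OF c_lin] by simp
lemma c_neg: "c k (- v) = - c k v" using linear_neg[OF c_lin] by simp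
lemma c_zero: "c k 0 = 0" using linear_0[OF c_lin] by simp
lemma cX: "k\<in>I \<Longrightarrow> j\<in>I \<Longrightarrow> c j (X k) = (if j = k then 1 else 0)"
  unfolding c_def using rep_basis[of "X k" "X j"] hinj unfolding Bs_def
  by (auto simp: inj_on_eq_iff)
lemma cz: "k\<in>I \<Longrightarrow> c k z = (if k = 2*m+1 then 1 else 0)"
  using cX[of "2*m+1" k] by auto
lemma ce_h: "u \<in> h \<Longrightarrow> representation Bs u e = 0"
proof -
  assume u: "u \<in> h"
  have "representation Bs x e = 0" if "x \<in> X ` I" for x
    using rep_basis[of x e] that e_notin_X unfolding Bs_def by auto
  then show ?thesis
    by (rule real_vector.linear_eq_0_on_span[OF rep_lin[of e]]) (use u hspan in auto)
qed
lemma h_expand: "u \<in> h \<Longrightarrow> (\<Sum>k\<in>I. c k u *\<^sub>R X k) = u"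
proof -
  assume u: "u \<in> h"
  have "u = (\<Sum>b\<in>Bs. representation Bs u b *\<^sub>R b)" using rep_expand by simp
  also have "\<dots> = representation Bs u e *\<^sub>R e + (\<Sum>b\<in>X ` I. representation Bs u b *\<^sub>R b)"
    unfolding Bs_def using e_notin_X by simp
  also have "\<dots> = (\<Sum>k\<in>I. c k u *\<^sub>R X k)"
    unfolding sum.reindex[OF hinj] comp_def c_def ce_h[OF u] by simp
  finally show ?thesis by simp
qed

end

declare sum.cl_ivl_Suc[simp del]

context heis begin

lemma br_hX:
  assumes u: "u \<in> h" and j: "j \<in> I"
  shows "br u (X j) = (if m < j \<and> j \<le> 2*m then c (j-m) u *\<^sub>R z
                       else if j \<le> m then - (c (j+m) u *\<^sub>R z) else 0)"
proof -
  have "br u (X j) = br (\<Sum>k\<in>I. c k u *\<^sub>R X k) (X j)" using h_expand[OF u] by simp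
  also have "\<dots> = (\<Sum>k\<in>I. c k u *\<^sub>R br (X k) (X j))"
    by (simp add: linear_sum[OF linl] br_scale_l)
  also have "\<dots> = (\<Sum>k\<in>I. c k u *\<^sub>R
      (if k \<le> m \<and> j = k + m then z else if j \<le> m \<and> k = j + m then - z else 0))"
    by (rule sum.cong) (use j htab in auto)
  also have "\<dots> = (if m < j \<and> j \<le> 2*m then c (j-m) u *\<^sub>R z
                       else if j \<le> m then - (c (j+m) u *\<^sub>R z) else 0)"
  proof (cases "m < j \<and> j \<le> 2*m")
    case True
    have "(\<Sum>k\<in>I. c k u *\<^sub>R
      (if k \<le> m \<and> j = k + m then z else if j \<le> m \<and> k = j + m then - z else 0)) =
      (\<Sum>k\<in>I. if k = j - m then c k u *\<^sub>R z else 0)"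
      by (rule sum.cong) (use True in auto)
    also have "\<dots> = c (j-m) u *\<^sub>R z" using True by (subst sum.delta) auto
    finally show ?thesis using True by simp
  next
    case F: False
    show ?thesis
    proof (cases "j \<le> m")
      case True
      have "(\<Sum>k\<in>I. c k u *\<^sub>R
        (if k \<le> m \<and> j = k + m then z else if j \<le> m \<and> k = j + m then - z else 0)) =
        (\<Sum>k\<in>I. if k = j + m then - (c k u *\<^sub>R z) else 0)"
        by (rule sum.cong) (use True j in auto)
      also have "\<dots> = - (c (j+m) u *\<^sub>R z)" using True j by (subst sum.delta) auto
      finally show ?thesis using True F by simp
    next
      case False
      have "(\<Sum>k\<in>I. c k u *\<^sub>R
        (if k \<le> m \<and> j = k + m then z else if j \<le> m \<and> k = j + m then - z else 0)) = 0"
        by (rule sum.neutral) (use False F j in auto)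
      then show ?thesis using False F by simp
    qed
  qed
  finally show ?thesis .
qed

lemma br_hz: "u \<in> h \<Longrightarrow> br u z = 0"
  using br_hX[of u "2*m+1"] by simp

lemma br_hh:
  assumes u: "u \<in> h" and w: "w \<in> h"
  shows "\<exists>a. br u w = a *\<^sub>R z"
proof -
  have "br u w = br u (\<Sum>k\<in>I. c k w *\<^sub>R X k)" using h_expand[OF w] by simp
  also have "\<dots> = (\<Sum>k\<in>I. c k w *\<^sub>R br u (X k))"
    by (simp add: linear_sum[OF linr] br_scale_r)
  finally have eq: "br u w = (\<Sum>k\<in>I. c k w *\<^sub>R br u (X k))" .
  have "br u (X k) \<in> span {z}" if "k \<in> I" for k
    using br_hX[OF u that] by (auto intro: span_scale span_base span_neg span_zero)
  then have "br u w \<in> span {z}" unfolding eq by (intro span_sum span_scale) auto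
  then show ?thesis by (auto simp: real_vector.span_singleton)
qed

lemma decomp: "\<exists>u t. u \<in> h \<and> x = u + t *\<^sub>R e"
proof -
  have "x \<in> span (insert e (X ` I))" using span_Bs Bs_def by simp
  then obtain t where "x - t *\<^sub>R e \<in> span (X ` I)" using span_breakdown_eq by blast
  then show ?thesis using hspan by (intro exI[of _ "x - t *\<^sub>R e"] exI[of _ t]) auto
qed

lemma br_in_h: "br x y \<in> h"
proof -
  obtain u t where u: "u \<in> h" and x: "x = u + t *\<^sub>R e" using decomp by blast
  obtain u' t' where u': "u' \<in> h" and y: "y = u' + t' *\<^sub>R e" using decomp by blast
  have 1: "br u y \<in> h" using idl_mem[OF u, of y] anti[of u y] sub_h by (simp add: subspace_neg)
  have "br e y = br e u'" unfolding y by (simp add: br_add_r br_scale_r alt)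
  then have 2: "br e y \<in> h" using idl_mem[OF u'] by simp
  show ?thesis unfolding x using 1 2 sub_h by (simp add: br_add_l br_scale_l subspace_add subspace_scale)
qed

definition "lam = c (2*m+1) (br e z)"

lemma pair:
  assumes i: "i \<in> {1..m}"
  shows "br e z = (c i (br e (X i)) + c (i+m) (br e (X (i+m)))) *\<^sub>R z"
proof -
  have iI: "i \<in> I" and imI: "i + m \<in> I" using i by auto
  have J: "br e (br (X i) (X (i+m))) + br (X i) (br (X (i+m)) e) + br (X (i+m)) (br e (X i)) = 0"
    by (rule jac)
  have z1: "br (X i) (X (i+m)) = z" using htab[OF iI imI] i by simp
  have a1: "br (br (X (i+m)) e) (X i) = - (c (i+m) (br (X (i+m)) e) *\<^sub>R z)"
    using br_hX[OF br_in_h iI] i by simp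
  have a2: "c (i+m) (br (X (i+m)) e) = - c (i+m) (br e (X (i+m)))"
    using anti[of "X (i+m)" e] c_neg by metis
  have t2: "br (X i) (br (X (i+m)) e) = - (c (i+m) (br e (X (i+m))) *\<^sub>R z)"
    using anti[of "X i" "br (X (i+m)) e"] a1 a2 by simp
  have t3: "br (X (i+m)) (br e (X i)) = - (c i (br e (X i)) *\<^sub>R z)"
  proof -
    have "br (X (i+m)) (br e (X i)) = - br (br e (X i)) (X (i+m))" by (rule anti)
    also have "br (br e (X i)) (X (i+m)) = c i (br e (X i)) *\<^sub>R z"
      using br_hX[OF br_in_h imI] i by simp
    finally show ?thesis .
  qed
  from J z1 t2 t3 show ?thesis by (simp add: algebra_simps scaleR_add_left eq_neg_iff_add_eq_0)
qed

lemma ez: "br e z = lam *\<^sub>R z"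
proof -
  obtain a where a: "br e z = a *\<^sub>R z" using pair[of 1] m1 by auto
  have "lam = a" unfolding lam_def a c_scale using cz[of "2*m+1"] by simp
  then show ?thesis using a by simp
qed

lemma pair_lam: "i \<in> {1..m} \<Longrightarrow> c i (br e (X i)) + c (i+m) (br e (X (i+m))) = lam"
  using pair[of i] ez z_nz by (metis scaleR_cancel_right)

lemma trace_basis: "linear f \<Longrightarrow> trace_map f = (\<Sum>b\<in>Bs. representation Bs (f b) b)"
  by (rule trace_coords) (use fin_Bs rep_lin rep_expand in auto)

lemma trace_split:
  assumes f: "linear f"
  shows "trace_map f = representation Bs (f e) e + (\<Sum>k\<in>I. c k (f (X k)))"
proof -
  have "trace_map f = (\<Sum>b\<in>Bs. representation Bs (f b) b)" by (rule trace_basis[OF f])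
  also have "\<dots> = representation Bs (f e) e + (\<Sum>b\<in>X ` I. representation Bs (f b) b)"
    using sum.insert[OF finite_imageI[OF finite_atLeastAtMost] e_notin_X, of "\<lambda>b. representation Bs (f b) b"]
    unfolding Bs_def[symmetric] .
  also have "(\<Sum>b\<in>X ` I. representation Bs (f b) b) = (\<Sum>k\<in>I. c k (f (X k)))"
    unfolding sum.reindex[OF hinj] comp_def c_def ..
  finally show ?thesis .
qed

lemma trace_e: "trace_map (br e) = (m+1) * lam"
proof -
  let ?f = "\<lambda>k. c k (br e (X k))"
  have "trace_map (br e) = representation Bs (br e e) e + (\<Sum>k\<in>I. ?f k)"
    by (rule trace_split[OF linr])
  also have "representation Bs (br e e) e = 0"
    using linear_0[OF rep_lin[of e]] alt by simp
  also have "I = {1..m+(m+1)}" by (simp add: algebra_simps)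
  also have "(\<Sum>k\<in>{1..m+(m+1)}. ?f k) = (\<Sum>k\<in>{1..m}. ?f k) + (\<Sum>k\<in>{m+1..m+(m+1)}. ?f k)"
    by (rule sum.ub_add_nat) simp
  also have "{m+1..m+(m+1)} = {1+m..(m+1)+m}" by (simp add: algebra_simps)
  also have "(\<Sum>k\<in>{1+m..(m+1)+m}. ?f k) = (\<Sum>k\<in>{1..m+1}. ?f (k+m))"
    by (rule sum.shift_bounds_cl_nat_ivl)
  also have "\<dots> = (\<Sum>k\<in>{1..m}. ?f (k+m)) + ?f (m+1+m)"
    by (simp add: sum.cl_ivl_Suc)
  also have "m+1+m = 2*m+1" by simp
  also have "?f (2*m+1) = lam" unfolding lam_def by simp
  finally have "trace_map (br e) = (\<Sum>k\<in>{1..m}. ?f k + ?f (k+m)) + lam"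
    by (simp add: sum.distrib)
  also have "(\<Sum>k\<in>{1..m}. ?f k + ?f (k+m)) = (\<Sum>k\<in>{1..m}. lam)"
    by (rule sum.cong) (use pair_lam in auto)
  finally show ?thesis by (simp add: algebra_simps)
qed

lemma trace_h: "u \<in> h \<Longrightarrow> trace_map (br u) = 0"
proof -
  assume u: "u \<in> h"
  have "trace_map (br u) = representation Bs (br u e) e + (\<Sum>k\<in>I. c k (br u (X k)))"
    by (rule trace_split[OF linr])
  also have "representation Bs (br u e) e = 0" using ce_h[OF br_in_h] .
  also have "(\<Sum>k\<in>I. c k (br u (X k))) = 0"
  proof (rule sum.neutral, rule ballI)
    fix k assume k: "k \<in> I"
    show "c k (br u (X k)) = 0"
    proof (cases "k = 2*m+1")
      case True then show ?thesis using br_hz[OF u] c_zero by simp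
    next
      case False
      obtain a where "br u (X k) = a *\<^sub>R z" using br_hh[OF u Xh[OF k]] by blast
      then show ?thesis using False cz[OF k] by (simp add: c_scale)
    qed
  qed
  finally show ?thesis by simp
qed

lemma trace_lin: "trace_map (br (u + t *\<^sub>R e)) = trace_map (br u) + t * trace_map (br e)"
  unfolding trace_map_def by (simp add: br_add_l br_scale_l inner_add_left sum.distrib sum_distrib_left)

lemma unimod_iff: "unimodular br \<longleftrightarrow> lam = 0"
proof
  assume "unimodular br"
  then have "trace_map (br e) = 0" by (simp add: unimodular_def)
  then show "lam = 0" using trace_e by simp
next
  assume l: "lam = 0"
  show "unimodular br" unfolding unimodular_def
  proof
    fix x
    obtain u t where u: "u \<in> h" and x: "x = u + t *\<^sub>R e" using decomp by blast
    show "trace_map (br x) = 0" unfolding x trace_lin trace_h[OF u] trace_e l by simp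
  qed
qed

end

lemma ip_neg_r: "inner_product B \<Longrightarrow> B z (- x) = - B z x"
  using linear_neg[OF ip_lin] by blast

context heis begin

lemma geo_perp:
  assumes ip: "inner_product B" and l: "lam \<noteq> 0" and g: "geodesic_element B br x"
  shows "B x z = 0"
proof -
  have xnz: "x \<noteq> 0" and gY: "\<And>Y. B x (br x Y) = 0" using g by (auto simp: geodesic_element_def)
  obtain u t where u: "u \<in> h" and x: "x = u + t *\<^sub>R e" using decomp by blast
  show ?thesis
  proof (cases "t = 0")
    case False
    have "br x z = br u z + t *\<^sub>R br e z" unfolding x by (simp only: br_add_l br_scale_l)
    also have "\<dots> = (t * lam) *\<^sub>R z" using br_hz[OF u] ez by simp
    finally have "br x z = (t * lam) *\<^sub>R z" .
    then have "(t * lam) * B x z = 0" using gY[of z] by (simp add: ip_scale_r[OF ip])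
    then show ?thesis using False l by simp
  next
    case True
    then have xu: "x = u" using x by simp
    show ?thesis
    proof (cases "\<exists>i\<in>{1..2*m}. c i u \<noteq> 0")
      case True
      then obtain i where i: "i \<in> {1..2*m}" "c i u \<noteq> 0" by blast
      show ?thesis
      proof (cases "i \<le> m")
        case True
        have "br u (X (i+m)) = c i u *\<^sub>R z" using br_hX[OF u, of "i+m"] i True by simp
        then have "c i u * B u z = 0" using gY[of "X (i+m)"] xu by (simp add: ip_scale_r[OF ip])
        then show ?thesis using i xu by simp
      next
        case False
        have jm: "i - m \<in> I" "\<not> (m < i - m \<and> i - m \<le> 2*m)" "i - m \<le> m" "i - m + m = i"
          using i False by auto
        have "br u (X (i-m)) = - (c i u *\<^sub>R z)" using br_hX[OF u jm(1)] jm(2-4) by simp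
        then have "- (c i u * B u z) = 0" using gY[of "X (i-m)"] xu
          by (simp add: ip_scale_r[OF ip] ip_neg_r[OF ip])
        then show ?thesis using i xu by simp
      qed
    next
      case False
      define a where "a = c (2*m+1) u"
      have "u = (\<Sum>k\<in>I. c k u *\<^sub>R X k)" using h_expand[OF u] by simp
      also have "\<dots> = (\<Sum>k\<in>I. if k = 2*m+1 then c k u *\<^sub>R X k else 0)"
        by (rule sum.cong) (use False in auto)
      also have "\<dots> = a *\<^sub>R z" by (subst sum.delta) (auto simp: a_def)
      finally have ua: "u = a *\<^sub>R z" .
      have a0: "a \<noteq> 0" using xnz xu ua by auto
      have "br u e = - (a * lam) *\<^sub>R z" unfolding ua using anti[of z e] ez by (simp add: br_scale_l)
      then have "B u (br u e) = - (a * a * lam) * B z z" unfolding ua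
        by (simp add: ip_scale_l[OF ip] ip_scale_r[OF ip] ip_neg_r[OF ip])
      moreover have "B z z > 0" using ip_pos[OF ip z_nz] .
      ultimately have "B u (br u e) \<noteq> 0" using a0 l by simp
      then show ?thesis using gY[of e] xu by simp
    qed
  qed
qed

lemma partA:
  assumes ip: "inner_product B" and l: "lam \<noteq> 0" and S: "geodesic_basis B br S"
  shows False
proof -
  have sp: "span S = UNIV" and g: "\<And>x. x \<in> S \<Longrightarrow> geodesic_element B br x"
    using S by (auto simp: geodesic_basis_def)
  have "B z x = 0" if "x \<in> S" for x using geo_perp[OF ip l g[OF that]] ip_sym[OF ip] by metis
  then have "B z z = 0" using ip_span_zero[OF ip, of S z z] sp by auto
  then show False using ip_pos[OF ip z_nz] by simp
qed

lemma central: "lam = 0 \<Longrightarrow> br y z = 0"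
proof -
  assume l: "lam = 0"
  obtain u t where u: "u \<in> h" and y: "y = u + t *\<^sub>R e" using decomp by blast
  have "br y z = br u z + t *\<^sub>R br e z" unfolding y by (simp only: br_add_l br_scale_l)
  then show "br y z = 0" using br_hz[OF u] ez l by simp
qed

lemma geo_h:
  assumes ip: "inner_product B" and x: "x \<in> h" and xz: "B x z = 0" and xe: "B x (br e x) = 0"
    and nz: "x \<noteq> 0"
  shows "geodesic_element B br x"
  unfolding geodesic_element_def
proof (intro conjI allI nz)
  fix Y
  obtain u t where u: "u \<in> h" and Y: "Y = u + t *\<^sub>R e" using decomp by blast
  obtain a where a: "br x u = a *\<^sub>R z" using br_hh[OF x u] by blast
  have "br x Y = a *\<^sub>R z - t *\<^sub>R br e x" unfolding Y using anti[of x e]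
    by (simp add: br_add_r br_scale_r a)
  then show "B x (br x Y) = 0" using xz xe by (simp add: ip_diff_r[OF ip] ip_scale_r[OF ip])
qed

lemma partB:
  assumes ip: "inner_product B" and l: "lam = 0"
  shows "\<exists>S. geodesic_basis B br S \<and> orthonormal_wrt B S"
proof -
  define zu where "zu = (1 / sqrt (B z z)) *\<^sub>R z"
  have pos: "B z z > 0" using ip_pos[OF ip z_nz] .
  have zuzu: "B zu zu = 1" unfolding zu_def using pos
    by (simp add: ip_scale_l[OF ip] ip_scale_r[OF ip])
  have zuh: "zu \<in> h" unfolding zu_def using zh sub_h by (simp add: subspace_scale)
  have on0: "orthonormal_wrt B {zu}" using zuzu by (simp add: orthonormal_wrt_def)
  obtain Sh where Sh: "{zu} \<subseteq> Sh" "Sh \<subseteq> h" "finite Sh" "orthonormal_wrt B Sh" "span Sh = h"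
    using gs_extend[OF ip sub_h _ _ on0] zuh by auto
  obtain Sg where Sg: "Sh \<subseteq> Sg" "finite Sg" "orthonormal_wrt B Sg" "span Sg = UNIV"
    using gs_extend[OF ip subspace_UNIV Sh(3) _ Sh(4)] by auto
  define T where "T = Sh - {zu}"
  have finT: "finite T" using Sh(3) T_def by simp
  have onT: "orthonormal_wrt B T" using on_subset[OF Sh(4)] T_def by blast
  have zuSg: "zu \<in> Sg" using Sh(1) Sg(1) by auto
  have TSg: "T \<subseteq> Sg" using Sg(1) T_def by auto
  have cent: "br y (a *\<^sub>R z) = 0" for y a using central[OF l] by (simp add: br_scale_r)
  have perp_h: "B x w = 0" if "x \<in> Sg" "x \<notin> Sh" "w \<in> h" for x w
  proof -
    have "B x s = 0" if "s \<in> Sh" for s using on_zero[OF Sg(3)] \<open>x \<in> Sg\<close> \<open>x \<notin> Sh\<close> that Sg(1) by blast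
    then show ?thesis using ip_span_zero[OF ip] Sh(5) \<open>w \<in> h\<close> by blast
  qed
  have perpT: "B y x = 0" if "y \<in> Sg" "y \<notin> T" "x \<in> span T" for x y
  proof -
    have "B y t = 0" if "t \<in> T" for t using on_zero[OF Sg(3)] \<open>y \<in> Sg\<close> \<open>y \<notin> T\<close> that TSg by blast
    then show ?thesis using ip_span_zero[OF ip] \<open>x \<in> span T\<close> by blast
  qed
  have tr0: "trace_map (br e) = 0" using trace_e l by simp
  have "trace_map (br e) = (\<Sum>b\<in>Sg. B (br e b) b)"
    by (rule trace_coords[OF linr Sg(2)]) (use ip_lin_l[OF ip] on_expand[OF ip Sg(3) Sg(2)] Sg(4) in auto)
  also have "\<dots> = (\<Sum>b\<in>T. B (br e b) b) + (\<Sum>b\<in>Sg - T. B (br e b) b)"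
    using sum.subset_diff[OF TSg Sg(2)] by (simp add: add.commute)
  also have "(\<Sum>b\<in>Sg - T. B (br e b) b) = 0"
  proof (rule sum.neutral, rule ballI)
    fix b assume b: "b \<in> Sg - T"
    show "B (br e b) b = 0"
    proof (cases "b = zu")
      case True then show ?thesis using cent unfolding zu_def by (simp add: ip_zero[OF ip])
    next
      case False
      then have "b \<notin> Sh" using b T_def by auto
      then have "B b (br e b) = 0" using perp_h b br_in_h by auto
      then show ?thesis using ip_sym[OF ip] by metis
    qed
  qed
  finally have "(\<Sum>b\<in>T. B (br e b) b) = 0" using tr0 by simp
  then have sumT: "(\<Sum>t\<in>T. B t (br e t)) = 0" using ip_sym[OF ip] by (metis (no_types, lifting) sum.cong)
  obtain T' where T': "finite T'" "orthonormal_wrt B T'" "span T' = span T" "\<forall>t\<in>T'. B t (br e t) = 0"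
    using isotropic_basis[OF ip linr finT onT sumT] by blast
  define S where "S = T' \<union> (Sg - T)"
  have T'sp: "x \<in> span T" if "x \<in> T'" for x using T'(3) span_base[of x T'] that by simp
  have cross: "B y x = 0" "B x y = 0" if "x \<in> T'" "y \<in> Sg - T" for x y
  proof -
    show "B y x = 0" using perpT that T'sp by blast
    then show "B x y = 0" using ip_sym[OF ip] by metis
  qed
  have onS: "orthonormal_wrt B S"
    unfolding orthonormal_wrt_def
  proof (intro ballI)
    fix x y assume x: "x \<in> S" and y: "y \<in> S"
    show "B x y = (if x = y then 1 else 0)"
    proof (cases "x \<in> T'")
      case xT: True
      show ?thesis
      proof (cases "y \<in> T'")
        case True then show ?thesis using T'(2) xT by (simp add: orthonormal_wrt_def)
      next
        case False
        then have "y \<in> Sg - T" using y S_def by auto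
        then show ?thesis using cross[OF xT] on_one[OF T'(2) xT] by auto
      qed
    next
      case xT: False
      then have xS: "x \<in> Sg - T" using x S_def by auto
      show ?thesis
      proof (cases "y \<in> T'")
        case True then show ?thesis using cross[OF True xS] on_one[OF T'(2) True] by auto
      next
        case False
        then have "y \<in> Sg - T" using y S_def by auto
        then show ?thesis using xS Sg(3) by (simp add: orthonormal_wrt_def)
      qed
    qed
  qed
  have spS: "span S = UNIV"
  proof -
    have "Sg \<subseteq> span S"
    proof
      fix y assume y: "y \<in> Sg"
      show "y \<in> span S"
      proof (cases "y \<in> T")
        case True
        then have "y \<in> span T'" using T'(3) span_base[of y T] by simp
        then show ?thesis using span_mono[of T' S] S_def by auto
      next
        case False then have "y \<in> S" using y S_def by simp
        then show ?thesis using span_base[of y S] by simp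
      qed
    qed
    then have "span Sg \<subseteq> span S" by (rule span_sub)
    then show ?thesis using Sg(4) by auto
  qed
  have geo: "geodesic_element B br x" if x: "x \<in> S" for x
  proof -
    have xx: "B x x = 1" using onS x by (simp add: orthonormal_wrt_def)
    have xnz: "x \<noteq> 0" using ip_nz[OF ip xx] .
    show ?thesis
    proof (cases "x \<in> T'")
      case True
      have "span T \<subseteq> h" using Sh(5) T_def span_mono[of T Sh] by auto
      then have xh: "x \<in> h" using T'sp[OF True] by auto
      have zuT: "zu \<in> Sg - T" using zuSg T_def by auto
      have "B zu x = 0" using cross(1)[OF True zuT] .
      then have "(1 / sqrt (B z z)) * B z x = 0" unfolding zu_def by (simp add: ip_scale_l[OF ip])
      then have "B z x = 0" using pos by simp
      then have xz: "B x z = 0" using ip_sym[OF ip] by metis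
      show ?thesis using geo_h[OF ip xh xz _ xnz] T'(4) True by blast
    next
      case False
      then have xS: "x \<in> Sg" "x \<notin> T" using x S_def by auto
      show ?thesis
      proof (cases "x = zu")
        case True
        have "br x Y = 0" for Y using anti[of x Y] cent True unfolding zu_def by simp
        then show ?thesis using xnz by (simp add: geodesic_element_def ip_zero[OF ip])
      next
        case False
        then have "x \<notin> Sh" using xS T_def by auto
        then have "B x (br x Y) = 0" for Y using perp_h xS br_in_h by blast
        then show ?thesis using xnz by (simp add: geodesic_element_def)
      qed
    qed
  qed
  have "geodesic_basis B br S" unfolding geodesic_basis_def
    using on_indep[OF ip onS] spS geo by blast
  then show ?thesis using onS by blast
qed

end

theorem theorem1p4:
  fixes br :: "'a::euclidean_space \<Rightarrow> 'a \<Rightarrow> 'a" and m :: nat and h :: "'a set"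
  assumes "lie_algebra br"
    and "m \<ge> 1"
    and "lie_ideal br h"
    and "dim h + 1 = DIM('a)"
    and "isomorphic_to_heisenberg br m h"
  shows "(\<not> unimodular br \<longrightarrow>
            (\<forall>B. inner_product B \<longrightarrow> \<not> (\<exists>S. geodesic_basis B br S))) \<and>
         (unimodular br \<longrightarrow>
            (\<forall>B. inner_product B \<longrightarrow> (\<exists>S. geodesic_basis B br S \<and> orthonormal_wrt B S)))"
proof -
  obtain X where X: "heisenberg_basis br m h X" using assms(5) by (auto simp: isomorphic_to_heisenberg_def)
  have "h \<noteq> UNIV"
  proof
    assume "h = UNIV"
    then have "dim h = DIM('a)" using dim_UNIV by simp
    then show False using assms(4) by simp
  qed
  then obtain e where e: "e \<notin> h" by blast
  interpret H: heis br m h X e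
    by (unfold_locales) (use assms X e in auto)
  show ?thesis using H.unimod_iff H.partA H.partB by blast
qed

end
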